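(* Let $X$ be a countably infinite set and let $A$ be a finite set. Then the lattice $\mathrm{Cl}(A)$ of all clones on $A$ is isomorphic to an interval of the lattice $\mathrm{Cl}_{loc}(X)$ of local clones on $X$.
   Context: For a set $Y$ and $n\ge1$, an $n$-ary operation on $Y$ is a map $Y^n\to Y$. A clone on $Y$ is a set of finitary operations on $Y$ containing all projections $\pi^n_k(x_1,\dots,x_n)=x_k$ and closed under composition (if $f$ is $n$-ary in the set and $g_1,\dots,g_n$ are $m$-ary in the set then $f(g_1,\dots,g_n)$ is in the set); $\mathrm{Cl}(Y)$ is the lattice of all clones on $Y$ ordered by inclusion. Giving $X$ the discrete topology and $X^{X^n}$ the product topology, a clone on $X$ is local if for each $n$ its set of $n$-ary operations is closed in $X^{X^n}$; equivalently, an $n$-ary operation $g$ belongs to the clone whenever for every finite $B\subseteq X^n$ some $n$-ary operation of the clone agrees with $g$ on $B$. $\mathrm{Cl}_{loc}(X)$ is the complete lattice of local clones on $X$ ordered by inclusion. An interval of a lattice is a set $\{c: a\le c\le b\}$ for some $a\le b$, with the induced order. *)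

theory Defs
  imports "HOL-Library.FuncSet" "HOL-Library.Countable_Set"
begin

text \<open>Since
distinct arities may give equal functions (e.g. Y empty), operations are tagged
with their arity: an element of a clone is a pair (n, f).\<close>

definition tuples :: "'a set \<Rightarrow> nat \<Rightarrow> 'a list set" where
  "tuples Y n = {xs. length xs = n \<and> set xs \<subseteq> Y}"

definition ops :: "'a set \<Rightarrow> nat \<Rightarrow> ('a list \<Rightarrow> 'a) set" where
  "ops Y n = tuples Y n \<rightarrow>\<^sub>E Y"

definition proj :: "'a set \<Rightarrow> nat \<Rightarrow> nat \<Rightarrow> 'a list \<Rightarrow> 'a" where
  "proj Y n k = (\<lambda>xs\<in>tuples Y n. xs ! k)"

definition compose :: "'a set \<Rightarrow> nat \<Rightarrow> ('a list \<Rightarrow> 'a) \<Rightarrow> ('a list \<Rightarrow> 'a) list \<Rightarrow> 'a list \<Rightarrow> 'a" where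
  "compose Y m f gs = (\<lambda>xs\<in>tuples Y m. f (map (\<lambda>g. g xs) gs))"

definition is_clone :: "'a set \<Rightarrow> (nat \<times> ('a list \<Rightarrow> 'a)) set \<Rightarrow> bool" where
  "is_clone Y C \<longleftrightarrow>
     (\<forall>(n, f)\<in>C. n \<ge> 1 \<and> f \<in> ops Y n) \<and>
     (\<forall>n k. 1 \<le> n \<and> k < n \<longrightarrow> (n, proj Y n k) \<in> C) \<and>
     (\<forall>n m f gs. (n, f) \<in> C \<and> length gs = n \<and> (\<forall>g\<in>set gs. (m, g) \<in> C)
        \<longrightarrow> (m, compose Y m f gs) \<in> C)"

definition clones :: "'a set \<Rightarrow> (nat \<times> ('a list \<Rightarrow> 'a)) set set" where
  "clones Y = {C. is_clone Y C}"

text \<open>Local clones: closed in the topology of pointwise convergence (X discrete).\<close>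
definition is_local_clone :: "'a set \<Rightarrow> (nat \<times> ('a list \<Rightarrow> 'a)) set \<Rightarrow> bool" where
  "is_local_clone X C \<longleftrightarrow> is_clone X C \<and>
     (\<forall>n g. n \<ge> 1 \<and> g \<in> ops X n \<and>
        (\<forall>B. finite B \<and> B \<subseteq> tuples X n \<longrightarrow> (\<exists>f. (n, f) \<in> C \<and> (\<forall>b\<in>B. f b = g b)))
        \<longrightarrow> (n, g) \<in> C)"

definition local_clones :: "'a set \<Rightarrow> (nat \<times> ('a list \<Rightarrow> 'a)) set set" where
  "local_clones X = {C. is_local_clone X C}"

end

theory Submission
  imports Defs
begin

lemma tuples_map: "xs \<in> tuples A n \<Longrightarrow> e ` A \<subseteq> X \<Longrightarrow> map e xs \<in> tuples X n"
  unfolding tuples_def by auto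

lemma ops_app: "f \<in> ops Y n \<Longrightarrow> xs \<in> tuples Y n \<Longrightarrow> f xs \<in> Y"
  unfolding ops_def by auto

lemma ops_eq: "f \<in> ops Y n \<Longrightarrow> g \<in> ops Y n \<Longrightarrow> (\<And>xs. xs \<in> tuples Y n \<Longrightarrow> f xs = g xs) \<Longrightarrow> f = g"
  unfolding ops_def by (rule PiE_ext) auto

lemma proj_ops: "k < n \<Longrightarrow> proj Y n k \<in> ops Y n"
  unfolding ops_def proj_def tuples_def by auto

lemma compose_ops: "f \<in> ops Y n \<Longrightarrow> length gs = n \<Longrightarrow> (\<forall>g\<in>set gs. g \<in> ops Y m)
   \<Longrightarrow> compose Y m f gs \<in> ops Y m"
proof -
  assume f: "f \<in> ops Y n" and l: "length gs = n" and g: "\<forall>g\<in>set gs. g \<in> ops Y m"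
  have "\<And>xs. xs \<in> tuples Y m \<Longrightarrow> map (\<lambda>g. g xs) gs \<in> tuples Y n"
    using l g by (auto simp: tuples_def ops_app)
  then show ?thesis using f unfolding compose_def ops_def by auto
qed

lemma map_app_tuples: "length gs = n \<Longrightarrow> (\<forall>g\<in>set gs. g \<in> ops Y m) \<Longrightarrow> xs \<in> tuples Y m
  \<Longrightarrow> map (\<lambda>g. g xs) gs \<in> tuples Y n"
  by (auto simp: tuples_def ops_app)

definition agree :: "('a \<Rightarrow> 'x) \<Rightarrow> 'a set \<Rightarrow> nat \<Rightarrow> ('x list \<Rightarrow> 'x) \<Rightarrow> ('a list \<Rightarrow> 'a) \<Rightarrow> bool" where
  "agree e A n f c \<longleftrightarrow> (\<forall>xs\<in>tuples A n. f (map e xs) = e (c xs))"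

definition phi :: "'x set \<Rightarrow> ('a \<Rightarrow> 'x) \<Rightarrow> 'a set \<Rightarrow> (nat \<times> ('a list \<Rightarrow> 'a)) set
    \<Rightarrow> (nat \<times> ('x list \<Rightarrow> 'x)) set" where
  "phi X e A C = {(n, f). n \<ge> 1 \<and> f \<in> ops X n \<and> (\<exists>c. (n, c) \<in> C \<and> agree e A n f c)}"

lemma list_all2_some: "list_all2 P xs (map (\<lambda>x. SOME y. P x y) xs)" if "\<forall>x\<in>set xs. \<exists>y. P x y"
  using that by (induction xs) (auto intro: someI_ex)

lemma map_agree: "list_all2 (\<lambda>g c. agree e A m g c) gs cs \<Longrightarrow> xs \<in> tuples A m
   \<Longrightarrow> map (\<lambda>g. g (map e xs)) gs = map e (map (\<lambda>c. c xs) cs)"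
  by (induction rule: list_all2_induct) (auto simp: agree_def)

lemma compose_agree:
  assumes eX: "e ` A \<subseteq> X" and ag: "agree e A n f c"
    and la: "list_all2 (\<lambda>g c. agree e A m g c) gs cs"
    and cs: "\<forall>c\<in>set cs. c \<in> ops A m" and len: "length cs = n"
  shows "agree e A m (compose X m f gs) (compose A m c cs)"
  unfolding agree_def
proof
  fix xs assume xs: "xs \<in> tuples A m"
  have "compose X m f gs (map e xs) = f (map (\<lambda>g. g (map e xs)) gs)"
    using tuples_map[OF xs eX] by (simp add: compose_def)
  also have "\<dots> = f (map e (map (\<lambda>c. c xs) cs))" using map_agree[OF la xs] by simp
  also have "\<dots> = e (c (map (\<lambda>c. c xs) cs))"
    using ag map_app_tuples[OF len cs xs] unfolding agree_def by (metis map_map)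
  also have "\<dots> = e (compose A m c cs xs)" using xs by (simp add: compose_def)
  finally show "compose X m f gs (map e xs) = e (compose A m c cs xs)" .
qed

lemma finite_tuples: "finite A \<Longrightarrow> finite (tuples A n)"
  unfolding tuples_def using finite_lists_length_eq[of A n] by (simp add: conj_commute)

lemma phi_clone:
  assumes eX: "e ` A \<subseteq> X" and fin: "finite A" and C: "is_clone A C"
  shows "is_local_clone X (phi X e A C)"
proof -
  note h1 = C[unfolded is_clone_def, THEN conjunct1]
  note h2 = C[unfolded is_clone_def, THEN conjunct2, THEN conjunct1]
  note h3 = C[unfolded is_clone_def, THEN conjunct2, THEN conjunct2]
  have cl1: "\<And>n f. (n,f)\<in>C \<Longrightarrow> f \<in> ops A n \<and> n \<ge> 1" using h1 by fast
  have cl2: "\<And>n k. 1 \<le> n \<Longrightarrow> k < n \<Longrightarrow> (n, proj A n k) \<in> C" using h2 by simp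
  have cl3: "\<And>n m f gs. (n,f)\<in>C \<Longrightarrow> length gs = n \<Longrightarrow> (\<forall>g\<in>set gs. (m,g)\<in>C) \<Longrightarrow> (m, compose A m f gs) \<in> C"
    using h3 by simp
  show ?thesis
  unfolding is_local_clone_def is_clone_def
proof (intro conjI allI impI)
  show "\<forall>(n, f)\<in>phi X e A C. 1 \<le> n \<and> f \<in> ops X n" by (auto simp: phi_def)
next
  fix n k :: nat assume nk: "1 \<le> n \<and> k < n"
  have "(n, proj A n k) \<in> C" using cl2 nk by blast
  moreover have "agree e A n (proj X n k) (proj A n k)"
    unfolding agree_def proof
    fix xs assume xs: "xs \<in> tuples A n"
    then have "k < length xs" using nk by (simp add: tuples_def)
    then show "proj X n k (map e xs) = e (proj A n k xs)"
      using xs tuples_map[OF xs eX] by (simp add: proj_def)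
  qed
  ultimately show "(n, proj X n k) \<in> phi X e A C"
    using nk proj_ops[of k n X] by (auto simp: phi_def)
next
  fix n m :: nat and f gs
  assume a: "(n, f) \<in> phi X e A C \<and> length gs = n \<and> (\<forall>g\<in>set gs. (m, g) \<in> phi X e A C)"
  then obtain c where c: "(n, c) \<in> C" "agree e A n f c" "f \<in> ops X n" "n \<ge> 1"
    by (auto simp: phi_def)
  have gs: "\<forall>g\<in>set gs. g \<in> ops X m \<and> m \<ge> 1" using a by (auto simp: phi_def)
  let ?P = "\<lambda>g c. (m, c) \<in> C \<and> agree e A m g c"
  have "\<forall>g\<in>set gs. \<exists>c. ?P g c" using a by (auto simp: phi_def)
  then have la: "list_all2 ?P gs (map (\<lambda>g. SOME c. ?P g c) gs)" (is "list_all2 _ _ ?cs")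
    by (rule list_all2_some)
  have csC: "\<forall>c\<in>set ?cs. (m, c) \<in> C"
    using la by (auto simp: list_all2_conv_all_nth in_set_conv_nth)
  then have csO: "\<forall>c\<in>set ?cs. c \<in> ops A m" using cl1 by blast
  have la2: "list_all2 (\<lambda>g c. agree e A m g c) gs ?cs"
    using la by (rule list_all2_mono) auto
  have "(m, compose A m c ?cs) \<in> C" using cl3[OF c(1) _ csC] a by simp
  moreover have "agree e A m (compose X m f gs) (compose A m c ?cs)"
    using compose_agree[OF eX c(2) la2 csO] a by simp
  moreover have "compose X m f gs \<in> ops X m" using compose_ops[OF c(3)] a gs by auto
  moreover have "m \<ge> 1"
  proof (cases "gs = []")
    case True
    then have "n = 0" using a by simp
    then show ?thesis using c by simp
  next
    case False then show ?thesis using gs by (cases gs) auto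
  qed
  ultimately show "(m, compose X m f gs) \<in> phi X e A C" by (auto simp: phi_def)
next
  fix n :: nat and g
  assume a: "1 \<le> n \<and> g \<in> ops X n \<and>
      (\<forall>B. finite B \<and> B \<subseteq> tuples X n \<longrightarrow> (\<exists>f. (n, f) \<in> phi X e A C \<and> (\<forall>b\<in>B. f b = g b)))"
  have fs: "finite (map e ` tuples A n) \<and> map e ` tuples A n \<subseteq> tuples X n"
    using finite_tuples[OF fin] tuples_map[OF _ eX] by auto
  note key = a[THEN conjunct2, THEN conjunct2, rule_format, OF fs]
  from key obtain f where f: "(n, f) \<in> phi X e A C" "\<forall>b\<in>map e ` tuples A n. f b = g b"
    by blast
  then obtain c where "(n, c) \<in> C" "agree e A n f c" by (auto simp: phi_def)
  then have "agree e A n g c" using f(2) by (auto simp: agree_def)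
  then show "(n, g) \<in> phi X e A C" using a \<open>(n, c) \<in> C\<close> by (auto simp: phi_def)
qed
qed

lemma clone_facts:
  assumes C: "is_clone A C"
  shows "\<And>n f. (n,f)\<in>C \<Longrightarrow> f \<in> ops A n \<and> n \<ge> 1"
    and "\<And>n k. 1 \<le> n \<Longrightarrow> k < n \<Longrightarrow> (n, proj A n k) \<in> C"
    and "\<And>n m f gs. (n,f)\<in>C \<Longrightarrow> length gs = n \<Longrightarrow> (\<forall>g\<in>set gs. (m,g)\<in>C) \<Longrightarrow> (m, compose A m f gs) \<in> C"
proof -
  note h1 = C[unfolded is_clone_def, THEN conjunct1]
  note h2 = C[unfolded is_clone_def, THEN conjunct2, THEN conjunct1]
  note h3 = C[unfolded is_clone_def, THEN conjunct2, THEN conjunct2]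
  show "\<And>n f. (n,f)\<in>C \<Longrightarrow> f \<in> ops A n \<and> n \<ge> 1" using h1 by fast
  show "\<And>n k. 1 \<le> n \<Longrightarrow> k < n \<Longrightarrow> (n, proj A n k) \<in> C" using h2 by simp
  show "\<And>n m f gs. (n,f)\<in>C \<Longrightarrow> length gs = n \<Longrightarrow> (\<forall>g\<in>set gs. (m,g)\<in>C) \<Longrightarrow> (m, compose A m f gs) \<in> C"
    using h3 by simp
qed

lemma proj_agree: assumes eX: "e ` A \<subseteq> X" and nk: "k < n"
  shows "agree e A n (proj X n k) (proj A n k)"
  unfolding agree_def proof
  fix xs assume xs: "xs \<in> tuples A n"
  then have "k < length xs" using nk by (simp add: tuples_def)
  then show "proj X n k (map e xs) = e (proj A n k xs)"
    using xs tuples_map[OF xs eX] by (simp add: proj_def)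
qed

lemma phi_mono: "C \<subseteq> D \<Longrightarrow> phi X e A C \<subseteq> phi X e A D"
  unfolding phi_def by blast

lemma extend_op:
  assumes inj: "inj_on e A" and eX: "e ` A \<subseteq> X" and x0: "x0 \<in> X" and c: "c \<in> ops A n"
  shows "\<exists>f\<in>ops X n. agree e A n f c"
proof
  define f where "f = (\<lambda>ys\<in>tuples X n. if set ys \<subseteq> e ` A then e (c (map (inv_into A e) ys)) else x0)"
  have "\<And>ys. set ys \<subseteq> e ` A \<Longrightarrow> length ys = n \<Longrightarrow> map (inv_into A e) ys \<in> tuples A n"
    by (auto simp: tuples_def inv_into_into)
  then have "\<And>ys. ys \<in> tuples X n \<Longrightarrow> f ys \<in> X"
    using ops_app[OF c] eX x0 unfolding f_def by (auto simp: tuples_def)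
  then show "f \<in> ops X n" unfolding ops_def f_def by auto
  show "agree e A n f c" unfolding agree_def
  proof
    fix xs assume xs: "xs \<in> tuples A n"
    have "map (inv_into A e) (map e xs) = xs"
      using xs inj by (induction xs arbitrary: n) (auto simp: tuples_def)
    moreover have "set (map e xs) \<subseteq> e ` A" using xs by (auto simp: tuples_def)
    ultimately show "f (map e xs) = e (c xs)" using tuples_map[OF xs eX] unfolding f_def by simp
  qed
qed

lemma phi_reflect:
  assumes inj: "inj_on e A" and eX: "e ` A \<subseteq> X" and x0: "x0 \<in> X"
    and C: "is_clone A C" and D: "is_clone A D" and sub: "phi X e A C \<subseteq> phi X e A D"
  shows "C \<subseteq> D"
proof
  fix p assume p: "p \<in> C"
  obtain n c where pc: "p = (n, c)" by (cases p)
  have c: "c \<in> ops A n" "n \<ge> 1" using clone_facts(1)[OF C] p pc by auto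
  obtain f where f: "f \<in> ops X n" "agree e A n f c" using extend_op[OF inj eX x0 c(1)] by blast
  have "(n, f) \<in> phi X e A C" using f c p pc unfolding phi_def by blast
  then have "(n, f) \<in> phi X e A D" using sub by blast
  then obtain d where d: "(n, d) \<in> D" "agree e A n f d" unfolding phi_def by blast
  have dops: "d \<in> ops A n" using clone_facts(1)[OF D d(1)] by simp
  have "d = c"
  proof (rule ops_eq[OF dops c(1)])
    fix xs assume "xs \<in> tuples A n"
    then have "e (d xs) = e (c xs)" using d(2) f(2) by (simp add: agree_def)
    moreover have "d xs \<in> A" "c xs \<in> A" using ops_app dops c(1) \<open>xs \<in> tuples A n\<close> by auto
    ultimately show "d xs = c xs" using inj by (simp add: inj_on_eq_iff)
  qed
  then show "p \<in> D" using d pc by simp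
qed

definition allops :: "'a set \<Rightarrow> (nat \<times> ('a list \<Rightarrow> 'a)) set" where
  "allops A = {(n, f). n \<ge> 1 \<and> f \<in> ops A n}"

lemma allops_clone: "is_clone A (allops A)"
  unfolding is_clone_def allops_def
proof (intro conjI allI impI)
  show "\<forall>(n, f)\<in>{(n, f). 1 \<le> n \<and> f \<in> ops A n}. 1 \<le> n \<and> f \<in> ops A n" by blast
next
  fix n k :: nat assume "1 \<le> n \<and> k < n"
  then show "(n, proj A n k) \<in> {(n, f). 1 \<le> n \<and> f \<in> ops A n}" using proj_ops by auto
next
  fix n m :: nat and f gs
  assume a: "(n, f) \<in> {(n, f). 1 \<le> n \<and> f \<in> ops A n} \<and> length gs = n \<and>
       (\<forall>g\<in>set gs. (m, g) \<in> {(n, f). 1 \<le> n \<and> f \<in> ops A n})"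
  then have "m \<ge> 1" by (cases gs) auto
  moreover have "compose A m f gs \<in> ops A m" using a compose_ops[of f A n gs m] by auto
  ultimately show "(m, compose A m f gs) \<in> {(n, f). 1 \<le> n \<and> f \<in> ops A n}" by simp
qed

lemma clone_sub_allops: "is_clone A C \<Longrightarrow> C \<subseteq> allops A"
  using clone_facts(1) unfolding allops_def by fast

lemma inter_clone: "is_clone A (\<Inter>(clones A))"
proof -
  have a: "allops A \<in> clones A" using allops_clone by (simp add: clones_def)
  show ?thesis unfolding is_clone_def
  proof (intro conjI allI impI)
    show "\<forall>(n, f)\<in>\<Inter>(clones A). 1 \<le> n \<and> f \<in> ops A n"
      using a unfolding allops_def by blast
  next
    fix n k :: nat assume "1 \<le> n \<and> k < n"
    then show "(n, proj A n k) \<in> \<Inter>(clones A)" using clone_facts(2) by (auto simp: clones_def)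
  next
    fix n m :: nat and f gs
    assume a: "(n, f) \<in> \<Inter>(clones A) \<and> length gs = n \<and> (\<forall>g\<in>set gs. (m, g) \<in> \<Inter>(clones A))"
    show "(m, compose A m f gs) \<in> \<Inter>(clones A)"
    proof
      fix C assume "C \<in> clones A"
      then have C: "is_clone A C" by (simp add: clones_def)
      have "(n, f) \<in> C" "\<forall>g\<in>set gs. (m, g) \<in> C" using a \<open>C \<in> clones A\<close> by auto
      then show "(m, compose A m f gs) \<in> C" using clone_facts(3)[OF C] a by blast
    qed
  qed
qed

definition pull :: "'x set \<Rightarrow> ('a \<Rightarrow> 'x) \<Rightarrow> 'a set \<Rightarrow> (nat \<times> ('x list \<Rightarrow> 'x)) set
    \<Rightarrow> (nat \<times> ('a list \<Rightarrow> 'a)) set" where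
  "pull X e A D = {(n, c). n \<ge> 1 \<and> c \<in> ops A n \<and> (\<exists>f. (n, f) \<in> D \<and> agree e A n f c)}"

lemma pull_clone:
  assumes eX: "e ` A \<subseteq> X" and D: "is_clone X D"
  shows "is_clone A (pull X e A D)"
  unfolding is_clone_def
proof (intro conjI allI impI)
  show "\<forall>(n, f)\<in>pull X e A D. 1 \<le> n \<and> f \<in> ops A n" unfolding pull_def by blast
next
  fix n k :: nat assume nk: "1 \<le> n \<and> k < n"
  then have "(n, proj X n k) \<in> D" using clone_facts(2)[OF D] by blast
  then show "(n, proj A n k) \<in> pull X e A D" using nk proj_ops[of k n A] proj_agree[OF eX, of k n]
    unfolding pull_def by blast
next
  fix n m :: nat and c cs
  assume a: "(n, c) \<in> pull X e A D \<and> length cs = n \<and> (\<forall>g\<in>set cs. (m, g) \<in> pull X e A D)"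
  then obtain f where f: "(n, f) \<in> D" "agree e A n f c" "n \<ge> 1" "c \<in> ops A n"
    unfolding pull_def by blast
  let ?P = "\<lambda>c f. (m, f) \<in> D \<and> agree e A m f c"
  have csp: "\<forall>c'\<in>set cs. m \<ge> 1 \<and> c' \<in> ops A m \<and> (\<exists>f. ?P c' f)" using a unfolding pull_def by blast
  then have "\<forall>c'\<in>set cs. \<exists>f. ?P c' f" by blast
  then have la: "list_all2 ?P cs (map (\<lambda>c. SOME f. ?P c f) cs)" (is "list_all2 _ _ ?fs")
    by (rule list_all2_some)
  have fsD: "\<forall>g\<in>set ?fs. (m, g) \<in> D"
    using la by (auto simp: list_all2_conv_all_nth in_set_conv_nth)
  have la2: "list_all2 (\<lambda>g c. agree e A m g c) ?fs cs"
    using la by (auto simp: list_all2_conv_all_nth)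
  have csO: "\<forall>c\<in>set cs. c \<in> ops A m" using csp by blast
  have "(m, compose X m f ?fs) \<in> D" using clone_facts(3)[OF D f(1) _ fsD] a by simp
  moreover have "agree e A m (compose X m f ?fs) (compose A m c cs)"
    using compose_agree[OF eX f(2) la2 csO] a by simp
  moreover have "compose A m c cs \<in> ops A m" using compose_ops[OF f(4)] a csO by auto
  moreover have "m \<ge> 1"
  proof (cases "cs = []")
    case True
    then have "n = 0" using a by simp
    then show ?thesis using f by simp
  next
    case False then show ?thesis using csp by (cases cs) auto
  qed
  ultimately show "(m, compose A m c cs) \<in> pull X e A D" unfolding pull_def by blast
qed

lemma hd_proj_J0: "1 \<le> Suc n \<Longrightarrow> (Suc n, proj A (Suc n) 0) \<in> \<Inter>(clones A)"
  using clone_facts(2) by (auto simp: clones_def)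

lemma phi_pull:
  assumes inj: "inj_on e A" and eX: "e ` A \<subseteq> X" and D: "is_clone X D"
    and L: "phi X e A (\<Inter>(clones A)) \<subseteq> D" and U: "D \<subseteq> phi X e A (allops A)"
  shows "phi X e A (pull X e A D) = D"
proof
  show "D \<subseteq> phi X e A (pull X e A D)"
  proof
    fix p assume p: "p \<in> D"
    obtain n f where pf: "p = (n, f)" by (cases p)
    have fo: "f \<in> ops X n" "n \<ge> 1" using clone_facts(1)[OF D] p pf by auto
    obtain c where c: "(n, c) \<in> allops A" "agree e A n f c" using U p pf unfolding phi_def by blast
    have "(n, c) \<in> pull X e A D" using c p pf fo unfolding pull_def allops_def by blast
    then show "p \<in> phi X e A (pull X e A D)" using pf fo c unfolding phi_def by blast
  qed
next
  show "phi X e A (pull X e A D) \<subseteq> D"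
  proof
    fix p assume p: "p \<in> phi X e A (pull X e A D)"
    obtain n f where pf: "p = (n, f)" by (cases p)
    obtain c where c: "(n, c) \<in> pull X e A D" "agree e A n f c" "n \<ge> 1" "f \<in> ops X n"
      using p pf unfolding phi_def by blast
    obtain f' where f': "(n, f') \<in> D" "agree e A n f' c" using c(1) unfolding pull_def by blast
    have f'o: "f' \<in> ops X n" using clone_facts(1)[OF D f'(1)] by simp
    define h where "h = (\<lambda>ys\<in>tuples X (Suc n). if set (tl ys) \<subseteq> e ` A then hd ys else f (tl ys))"
    have "\<And>ys. ys \<in> tuples X (Suc n) \<Longrightarrow> h ys \<in> X"
    proof -
      fix ys assume ys: "ys \<in> tuples X (Suc n)"
      then obtain y zs where yz: "ys = y # zs" "y \<in> X" "zs \<in> tuples X n"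
        by (cases ys) (auto simp: tuples_def)
      show "h ys \<in> X" using ys yz ops_app[OF c(4) yz(3)] unfolding h_def by simp
    qed
    then have ho: "h \<in> ops X (Suc n)" unfolding ops_def h_def by auto
    have agr: "agree e A (Suc n) h (proj A (Suc n) 0)" unfolding agree_def
    proof
      fix xs assume xs: "xs \<in> tuples A (Suc n)"
      then obtain y zs where yz: "xs = y # zs" by (cases xs) (auto simp: tuples_def)
      have "set (tl (map e xs)) \<subseteq> e ` A" using xs yz by (auto simp: tuples_def)
      then show "h (map e xs) = e (proj A (Suc n) 0 xs)"
        using tuples_map[OF xs eX] xs yz unfolding h_def proj_def by simp
    qed
    have j: "(Suc n, proj A (Suc n) 0) \<in> \<Inter>(clones A)" by (rule hd_proj_J0) simp
    have "(Suc n, h) \<in> phi X e A (\<Inter>(clones A))"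
      unfolding phi_def using ho j agr by auto
    then have hD: "(Suc n, h) \<in> D" using L by blast
    let ?gs = "f' # map (proj X n) [0..<n]"
    have gsD: "\<forall>g\<in>set ?gs. (n, g) \<in> D" using f'(1) clone_facts(2)[OF D] c(3) by auto
    have cD: "(n, compose X n h ?gs) \<in> D" using clone_facts(3)[OF D hD _ gsD] by simp
    have gsO: "\<forall>g\<in>set ?gs. g \<in> ops X n" using gsD clone_facts(1)[OF D] by blast
    have co: "compose X n h ?gs \<in> ops X n" using compose_ops[OF ho _ gsO] by simp
    have "compose X n h ?gs = f"
    proof (rule ops_eq[OF co c(4)])
      fix ys assume ys: "ys \<in> tuples X n"
      have m: "map (\<lambda>g. g ys) (map (proj X n) [0..<n]) = ys"
      proof -
        have "map (\<lambda>g. g ys) (map (proj X n) [0..<n]) = map (\<lambda>k. ys ! k) [0..<length ys]"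
          using ys by (simp add: proj_def tuples_def comp_def)
        then show ?thesis by (simp add: map_nth)
      qed
      have "f' ys # ys \<in> tuples X (Suc n)" using ys ops_app[OF f'o ys] by (simp add: tuples_def)
      then have eq: "compose X n h ?gs ys = (if set ys \<subseteq> e ` A then f' ys else f ys)"
        using ys m unfolding compose_def h_def by simp
      show "compose X n h ?gs ys = f ys"
      proof (cases "set ys \<subseteq> e ` A")
        case True
        define xs where "xs = map (inv_into A e) ys"
        have xs: "xs \<in> tuples A n" using True ys by (auto simp: xs_def tuples_def inv_into_into)
        have "map e xs = ys" using True unfolding xs_def
          by (induction ys) (auto simp: f_inv_into_f)
        then have "f' ys = f ys" using f'(2) c(2) xs by (metis agree_def)
        then show ?thesis using eq True by simp
      next
        case False then show ?thesis using eq by simp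
      qed
    qed
    then show "p \<in> D" using cD pf by simp
  qed
qed

theorem proposition2p2:
  fixes X :: "'x set" and A :: "'a set"
  assumes "countable X" and "infinite X" and "finite A"
  shows "\<exists>L U \<phi>. L \<in> local_clones X \<and> U \<in> local_clones X \<and> L \<subseteq> U \<and>
           bij_betw \<phi> (clones A) {C \<in> local_clones X. L \<subseteq> C \<and> C \<subseteq> U} \<and>
           (\<forall>C\<in>clones A. \<forall>D\<in>clones A. C \<subseteq> D \<longleftrightarrow> \<phi> C \<subseteq> \<phi> D)"
proof -
  obtain B where B: "finite B" "card B = card A" "B \<subseteq> X"
    using infinite_arbitrarily_large[OF assms(2)] by blast
  obtain e where e: "e ` A \<subseteq> B" "inj_on e A" using card_le_inj[OF assms(3) B(1)] B(2) by auto
  have eX: "e ` A \<subseteq> X" using e B by blast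
  have "X \<noteq> {}" using assms(2) by auto
  then obtain x0 where x0: "x0 \<in> X" by blast
  define J where "J = \<Inter>(clones A)"
  define L where "L = phi X e A J"
  define U where "U = phi X e A (allops A)"
  have Jc: "is_clone A J" using inter_clone J_def by simp
  have Oc: "is_clone A (allops A)" by (rule allops_clone)
  have loc: "\<And>C. C \<in> clones A \<Longrightarrow> phi X e A C \<in> local_clones X"
    using phi_clone[OF eX assms(3)] by (simp add: clones_def local_clones_def)
  have Jle: "\<And>C. C \<in> clones A \<Longrightarrow> J \<subseteq> C" unfolding J_def by blast
  have Ole: "\<And>C. C \<in> clones A \<Longrightarrow> C \<subseteq> allops A" using clone_sub_allops by (simp add: clones_def)
  have Jin: "J \<in> clones A" and Oin: "allops A \<in> clones A" using Jc Oc by (auto simp: clones_def)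
  have ord: "\<forall>C\<in>clones A. \<forall>D\<in>clones A. C \<subseteq> D \<longleftrightarrow> phi X e A C \<subseteq> phi X e A D"
  proof (intro ballI iffI)
    fix C D assume "C \<in> clones A" "D \<in> clones A"
    { assume "C \<subseteq> D" then show "phi X e A C \<subseteq> phi X e A D" by (rule phi_mono) }
    { assume "phi X e A C \<subseteq> phi X e A D" then show "C \<subseteq> D"
        using phi_reflect[OF e(2) eX x0] \<open>C \<in> clones A\<close> \<open>D \<in> clones A\<close>
        by (simp add: clones_def) }
  qed
  have bij: "bij_betw (phi X e A) (clones A) {C \<in> local_clones X. L \<subseteq> C \<and> C \<subseteq> U}"
    unfolding bij_betw_def
  proof
    show "inj_on (phi X e A) (clones A)"
    proof (rule inj_onI)
      fix C D assume a: "C \<in> clones A" "D \<in> clones A" "phi X e A C = phi X e A D"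
      have "C \<subseteq> D" using ord[rule_format, OF a(1) a(2)] a(3) by simp
      moreover have "D \<subseteq> C" using ord[rule_format, OF a(2) a(1)] a(3) by simp
      ultimately show "C = D" by (rule subset_antisym)
    qed
    show "phi X e A ` clones A = {C \<in> local_clones X. L \<subseteq> C \<and> C \<subseteq> U}"
    proof
      show "phi X e A ` clones A \<subseteq> {C \<in> local_clones X. L \<subseteq> C \<and> C \<subseteq> U}"
      proof (rule image_subsetI)
        fix C assume C: "C \<in> clones A"
        show "phi X e A C \<in> {C \<in> local_clones X. L \<subseteq> C \<and> C \<subseteq> U}"
          using loc[OF C] phi_mono[OF Jle[OF C]] phi_mono[OF Ole[OF C]] unfolding L_def U_def by blast
      qed
    next
      show "{C \<in> local_clones X. L \<subseteq> C \<and> C \<subseteq> U} \<subseteq> phi X e A ` clones A"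
      proof
        fix D assume D: "D \<in> {C \<in> local_clones X. L \<subseteq> C \<and> C \<subseteq> U}"
        then have Dc: "is_clone X D" by (simp add: local_clones_def is_local_clone_def)
        have LD: "L \<subseteq> D" "D \<subseteq> U" using D by auto
        have "phi X e A (pull X e A D) = D"
          by (rule phi_pull[OF e(2) eX Dc]) (use LD in \<open>simp_all add: L_def U_def J_def\<close>)
        moreover have "pull X e A D \<in> clones A" using pull_clone[OF eX Dc] by (simp add: clones_def)
        ultimately show "D \<in> phi X e A ` clones A" by (metis image_eqI)
      qed
    qed
  qed
  show ?thesis
    apply (rule exI[of _ L], rule exI[of _ U], rule exI[of _ "phi X e A"])
    apply (intro conjI)
    using loc[OF Jin] loc[OF Oin] phi_mono[OF Ole[OF Jin], of X e A] bij ord unfolding L_def U_def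
        apply simp_all
    done
qed

end
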